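(* Let $P$ be a finite poset. Then $|\Delta_{\mathcal O(P)}\setminus\Delta^{*}_{\mathcal O(P)}|=|\Delta_{\mathcal C(P)}\setminus\Delta^{*}_{\mathcal C(P)}|$.
   Context: For a finite poset $P=\{p_1,\dots,p_d\}$ and $W\subset P$ put $\rho(W)=\sum_{p_i\in W}\mathbf e_i\in\mathbb R^d$ ($\rho(\emptyset)=0$). The order polytope is $\mathcal O(P)=\{x\in\mathbb R^d: 0\le x_i\le 1 \text{ for all } i,\ x_i\ge x_j \text{ if } p_i\le p_j\}$ and the chain polytope is $\mathcal C(P)=\{x\in\mathbb R^d: x_i\ge 0 \text{ for all } i,\ x_{i_1}+\dots+x_{i_k}\le 1 \text{ if } p_{i_1}<\dots<p_{i_k}\}$; the vertices of $\mathcal O(P)$ are the $\rho(I)$ for poset ideals $I$ and those of $\mathcal C(P)$ are the $\rho(A)$ for antichains $A$ (both including $\emptyset$). For a poset ideal $I$, $\max(I)$ is its set of maximal elements; for an antichain $A$, $\langle A\rangle=\{x: x\le p \text{ for some } p\in A\}$. $E^{*}_{\mathcal O(P)}$ is the set of pairs $\{I,J\}$ of distinct poset ideals such that $\mathrm{conv}\{\rho(I),\rho(J)\}$ is an edge of $\mathcal O(P)$ but $\mathrm{conv}\{\rho(\max I),\rho(\max J)\}$ is not an edge of $\mathcal C(P)$. $E^{*}_{\mathcal C(P)}$ is the set of pairs $\{A,B\}$ of distinct antichains such that $\mathrm{conv}\{\rho(A),\rho(B)\}$ is an edge of $\mathcal C(P)$ but $\mathrm{conv}\{\rho(\langle A\rangle),\rho(\langle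 B\rangle)\}$ is not an edge of $\mathcal O(P)$. $\Delta_{\mathcal O(P)}$ is the set of triples $\{I,J,K\}$ of pairwise distinct poset ideals such that $\mathrm{conv}\{\rho(I),\rho(J),\rho(K)\}$ is a 2-face of $\mathcal O(P)$; $\Delta_{\mathcal C(P)}$ is the set of triples $\{A,B,C\}$ of pairwise distinct antichains such that $\mathrm{conv}\{\rho(A),\rho(B),\rho(C)\}$ is a 2-face of $\mathcal C(P)$. $\Delta^{*}_{\mathcal O(P)}$ consists of those $\{I,J,K\}\in\Delta_{\mathcal O(P)}$ for which at least one of $\{I,J\},\{J,K\},\{I,K\}$ lies in $E^{*}_{\mathcal O(P)}$; $\Delta^{*}_{\mathcal C(P)}$ consists of those $\{A,B,C\}\in\Delta_{\mathcal C(P)}$ for which at least one of $\{A,B\},\{B,C\},\{A,C\}$ lies in $E^{*}_{\mathcal C(P)}$. *)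

theory Defs
  imports "HOL-Analysis.Analysis"
begin

text \<open>A finite poset P is modelled by a finite type 'a with a partial order;
  R^d with coordinates indexed by the elements of P is real^'a.\<close>

definition rho :: "'a::finite set \<Rightarrow> real^'a" where
  "rho W = (\<chi> i. if i \<in> W then 1 else 0)"

definition poset_ideal :: "'a::order set \<Rightarrow> bool" where
  "poset_ideal I \<longleftrightarrow> (\<forall>x y. x \<le> y \<longrightarrow> y \<in> I \<longrightarrow> x \<in> I)"

definition antichain :: "'a::order set \<Rightarrow> bool" where
  "antichain A \<longleftrightarrow> (\<forall>x\<in>A. \<forall>y\<in>A. x \<le> y \<longrightarrow> x = y)"

definition chain_set :: "'a::order set \<Rightarrow> bool" where
  "chain_set C \<longleftrightarrow> (\<forall>x\<in>C. \<forall>y\<in>C. x \<le> y \<or> y \<le> x)"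

definition order_polytope :: "(real^'a::{finite,order}) set" where
  "order_polytope = {x. (\<forall>i. 0 \<le> x$i \<and> x$i \<le> 1) \<and> (\<forall>i j. i \<le> j \<longrightarrow> x$j \<le> x$i)}"

definition chain_polytope :: "(real^'a::{finite,order}) set" where
  "chain_polytope = {x. (\<forall>i. 0 \<le> x$i) \<and>
      (\<forall>C. C \<noteq> {} \<and> chain_set C \<longrightarrow> (\<Sum>i\<in>C. x$i) \<le> 1)}"

definition maxel :: "'a::order set \<Rightarrow> 'a set" where
  "maxel I = {x\<in>I. \<forall>y\<in>I. x \<le> y \<longrightarrow> x = y}"

definition downset :: "'a::order set \<Rightarrow> 'a set" where
  "downset A = {x. \<exists>p\<in>A. x \<le> p}"

definition is_edge :: "(real^'n) set \<Rightarrow> real^'n \<Rightarrow> real^'n \<Rightarrow> bool" where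
  "is_edge S a b \<longleftrightarrow> convex hull {a, b} face_of S \<and> aff_dim (convex hull {a, b}) = 1"

definition is_2face :: "(real^'n) set \<Rightarrow> real^'n \<Rightarrow> real^'n \<Rightarrow> real^'n \<Rightarrow> bool" where
  "is_2face S a b c \<longleftrightarrow> convex hull {a, b, c} face_of S \<and> aff_dim (convex hull {a, b, c}) = 2"

definition EO_star :: "('a::{finite,order}) set set set" where
  "EO_star = {{I, J} | I J. poset_ideal I \<and> poset_ideal J \<and> I \<noteq> J \<and>
      is_edge (order_polytope :: (real^'a::{finite,order}) set) (rho I) (rho J) \<and>
      \<not> is_edge (chain_polytope :: (real^'a::{finite,order}) set) (rho (maxel I)) (rho (maxel J))}"

definition EC_star :: "'a::{finite,order} set set set" where
  "EC_star = {{A, B} | A B. antichain A \<and> antichain B \<and> A \<noteq> B \<and>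
      is_edge (chain_polytope :: (real^'a::{finite,order}) set) (rho A) (rho B) \<and>
      \<not> is_edge (order_polytope :: (real^'a::{finite,order}) set) (rho (downset A)) (rho (downset B))}"

definition DeltaO :: "'a::{finite,order} set set set" where
  "DeltaO = {{I, J, K} | I J K. poset_ideal I \<and> poset_ideal J \<and> poset_ideal K \<and>
      I \<noteq> J \<and> J \<noteq> K \<and> I \<noteq> K \<and>
      is_2face (order_polytope :: (real^'a::{finite,order}) set) (rho I) (rho J) (rho K)}"

definition DeltaC :: "'a::{finite,order} set set set" where
  "DeltaC = {{A, B, C} | A B C. antichain A \<and> antichain B \<and> antichain C \<and>
      A \<noteq> B \<and> B \<noteq> C \<and> A \<noteq> C \<and>
      is_2face (chain_polytope :: (real^'a::{finite,order}) set) (rho A) (rho B) (rho C)}"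

definition DeltaO_star :: "'a::{finite,order} set set set" where
  "DeltaO_star = {T \<in> DeltaO. \<exists>I J. I \<in> T \<and> J \<in> T \<and> I \<noteq> J \<and> {I, J} \<in> EO_star}"

definition DeltaC_star :: "'a::{finite,order} set set set" where
  "DeltaC_star = {T \<in> DeltaC. \<exists>A B. A \<in> T \<and> B \<in> T \<and> A \<noteq> B \<and> {A, B} \<in> EC_star}"

end

theory Submission
  imports Defs
begin

lemma rho_nth[simp]: "rho W $ i = (if i \<in> W then 1 else 0)"
  by (simp add: rho_def)

lemma rho_inj: "rho X = rho Y \<Longrightarrow> X = Y"
  by (auto simp: vec_eq_iff split: if_splits)

lemma rho_eq_iff[simp]: "rho X = rho Y \<longleftrightarrow> X = Y"
  using rho_inj by blast

lemma rho_segment: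
  assumes "rho X \<in> closed_segment (rho Y) (rho Z)"
  shows "X = Y \<or> X = Z"
proof -
  obtain u where u: "0 \<le> u" "u \<le> 1" "rho X = (1 - u) *\<^sub>R rho Y + u *\<^sub>R rho Z"
    using assms by (auto simp: in_segment)
  have c: "\<And>i. (if i \<in> X then 1 else 0) = (1 - u) * (if i \<in> Y then 1 else 0) + u * (if i \<in> Z then (1::real) else 0)"
  proof -
    fix i
    have "rho X $ i = ((1 - u) *\<^sub>R rho Y + u *\<^sub>R rho Z) $ i" using u(3) by simp
    then show "?thesis i" by simp
  qed
  show ?thesis
  proof (cases "u = 0 \<or> u = 1")
    case True
    then show ?thesis using u(3) by auto
  next
    case False
    then have "0 < u" "u < 1" using u by auto
    have "i \<in> Y \<longleftrightarrow> i \<in> Z" for i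
    proof -
      have "(if i \<in> X then 1 else 0) = (1 - u) * (if i \<in> Y then 1 else 0) + u * (if i \<in> Z then (1::real) else 0)"
        by (rule c)
      then show ?thesis using \<open>0 < u\<close> \<open>u < 1\<close> by (auto split: if_splits)
    qed
    then have "Y = Z" by auto
    then have "rho X = rho Y" using u(3) by (simp add: algebra_simps)
    then show ?thesis by simp
  qed
qed

lemma rho_not_in_line:
  assumes "X \<noteq> Y" "X \<noteq> Z" "Y \<noteq> Z"
  shows "rho X \<notin> affine hull {rho Y, rho Z}"
proof
  assume "rho X \<in> affine hull {rho Y, rho Z}"
  then obtain u v where uv: "u + v = 1" "rho X = u *\<^sub>R rho Y + v *\<^sub>R rho Z"
    by (auto simp: affine_hull_2)
  have c: "(if i \<in> X then 1 else 0) = u * (if i \<in> Y then 1 else 0) + v * (if i \<in> Z then (1::real) else 0)" for i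
  proof -
    have "rho X $ i = (u *\<^sub>R rho Y + v *\<^sub>R rho Z) $ i" using uv(2) by simp
    then show ?thesis by simp
  qed
  obtain i where i: "i \<in> Y \<and> i \<notin> Z \<or> i \<in> Z \<and> i \<notin> Y" using assms(3) by blast
  then show False
  proof
    assume "i \<in> Y \<and> i \<notin> Z"
    then have "u = 0 \<or> u = 1" using c[of i] by (auto split: if_splits)
    then have "rho X = rho Z \<or> rho X = rho Y" using uv by auto
    then show False using assms by simp
  next
    assume "i \<in> Z \<and> i \<notin> Y"
    then have "v = 0 \<or> v = 1" using c[of i] by (auto split: if_splits)
    then have "rho X = rho Z \<or> rho X = rho Y" using uv by auto
    then show False using assms by simp
  qed
qed

lemma rho_indep3:
  assumes "X \<noteq> Y" "X \<noteq> Z" "Y \<noteq> Z"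
  shows "\<not> affine_dependent {rho X, rho Y, rho Z}"
proof
  assume "affine_dependent {rho X, rho Y, rho Z}"
  then obtain x where x: "x \<in> {rho X, rho Y, rho Z}" "x \<in> affine hull ({rho X, rho Y, rho Z} - {x})"
    unfolding affine_dependent_def by blast
  have d: "rho X \<noteq> rho Y" "rho X \<noteq> rho Z" "rho Y \<noteq> rho Z" using assms by auto
  have e1: "{rho X, rho Y, rho Z} - {rho X} = {rho Y, rho Z}" using d by auto
  have e2: "{rho X, rho Y, rho Z} - {rho Y} = {rho X, rho Z}" using d by auto
  have e3: "{rho X, rho Y, rho Z} - {rho Z} = {rho X, rho Y}" using d by auto
  from x(1) have "x = rho X \<or> x = rho Y \<or> x = rho Z" by simp
  then show False
  proof (elim disjE)
    assume "x = rho X" then have "rho X \<in> affine hull {rho Y, rho Z}" using x(2) e1 by simp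
    then show False using rho_not_in_line[of X Y Z] assms by blast
  next
    assume "x = rho Y" then have "rho Y \<in> affine hull {rho X, rho Z}" using x(2) e2 by simp
    then show False using rho_not_in_line[of Y X Z] assms by blast
  next
    assume "x = rho Z" then have "rho Z \<in> affine hull {rho X, rho Y}" using x(2) e3 by simp
    then show False using rho_not_in_line[of Z X Y] assms by blast
  qed
qed

lemma rho_affdim3:
  assumes "X \<noteq> Y" "X \<noteq> Z" "Y \<noteq> Z"
  shows "aff_dim (convex hull {rho X, rho Y, rho Z}) = 2"
proof -
  have "card {rho X, rho Y, rho Z} = 3" using assms by auto
  then show ?thesis using rho_indep3[OF assms] affine_independent_iff_card[of "{rho X, rho Y, rho Z}"]
    by (simp add: aff_dim_convex_hull)
qed

lemma rho_affdim2:
  assumes "X \<noteq> Y"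
  shows "aff_dim (convex hull {rho X, rho Y}) = 1"
proof -
  have "rho X \<noteq> rho Y" using assms by simp
  then have "aff_dim {rho X, rho Y} = 1" by simp
  then show ?thesis by (simp only: aff_dim_convex_hull)
qed

lemma face_edge:
  assumes "X \<noteq> Y" "X \<noteq> Z" "Y \<noteq> Z" "is_2face S (rho X) (rho Y) (rho Z)"
  shows "is_edge S (rho X) (rho Y)"
proof -
  have "convex hull {rho X, rho Y} face_of convex hull {rho X, rho Y, rho Z}"
    apply (rule iffD2[OF face_of_convex_hull_affine_independent[OF rho_indep3[OF assms(1-3)]]])
    apply (rule exI[where x="{rho X, rho Y}"])
    by auto
  moreover have "convex hull {rho X, rho Y, rho Z} face_of S" using assms(4) unfolding is_2face_def by blast
  ultimately have "convex hull {rho X, rho Y} face_of S" by (rule face_of_trans)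
  then show ?thesis unfolding is_edge_def using rho_affdim2[OF assms(1)] by blast
qed

lemma not_face:
  assumes "a \<in> S" "b \<in> S" "c \<in> S" "d \<in> S" "a + b = c + d" "c \<notin> closed_segment a b"
  shows "\<not> (convex hull {a, b} face_of S)"
proof
  assume F: "convex hull {a, b} face_of S"
  have m: "midpoint a b \<in> convex hull {a, b}"
    by (metis midpoint_in_closed_segment segment_convex_hull)
  have e: "midpoint c d = midpoint a b" using assms(5) by (simp add: midpoint_def)
  have "c \<noteq> d"
  proof
    assume "c = d"
    then have "c = midpoint a b" using e by simp
    then show False using assms(6) by (simp add: midpoint_in_closed_segment)
  qed
  then have "midpoint a b \<in> open_segment c d" using e by (metis midpoint_in_open_segment)
  then have "c \<in> convex hull {a, b}" using face_ofD[OF F _ assms(3,4) m] by blast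
  then show False using assms(6) by (simp add: segment_convex_hull)
qed

definition conn :: "'a::order set \<Rightarrow> bool" where
  "conn S \<longleftrightarrow> (\<forall>X. X \<subseteq> S \<longrightarrow> X \<noteq> {} \<longrightarrow> (\<forall>u\<in>X. \<forall>v\<in>S. (u \<le> v \<or> v \<le> u) \<longrightarrow> v \<in> X) \<longrightarrow> X = S)"

lemma connD:
  assumes "conn S" "X \<subseteq> S" "x \<in> X" "\<And>u v. u \<in> X \<Longrightarrow> v \<in> S \<Longrightarrow> u \<le> v \<or> v \<le> u \<Longrightarrow> v \<in> X"
  shows "X = S"
  using assms unfolding conn_def by blast

lemma sum_rho: "finite ch \<Longrightarrow> (\<Sum>i\<in>ch. rho A $ i) = real (card (ch \<inter> A))"
  by (simp add: sum.If_cases)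

lemma chain_anti_card:
  assumes "chain_set ch" "antichain A" "finite ch"
  shows "card (ch \<inter> A) \<le> 1"
proof -
  have "\<forall>x\<in>ch \<inter> A. \<forall>y\<in>ch \<inter> A. x = y"
  proof (intro ballI)
    fix x y assume "x \<in> ch \<inter> A" "y \<in> ch \<inter> A"
    then have "x \<le> y \<or> y \<le> x" "x \<in> A" "y \<in> A" using assms(1) unfolding chain_set_def by auto
    then show "x = y" using assms(2) unfolding antichain_def by auto
  qed
  then show ?thesis using assms(3) by (simp add: card_le_Suc0_iff_eq)
qed

lemma chain_anti_card1:
  assumes "chain_set ch" "antichain A" "finite ch" "ch \<inter> A \<noteq> {}"
  shows "card (ch \<inter> A) = 1"
proof -
  have "card (ch \<inter> A) > 0" using assms(3,4) by (simp add: card_gt_0_iff)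
  then show ?thesis using chain_anti_card[OF assms(1-3)] by linarith
qed

lemma rho_ideal_O:
  fixes I :: "'a::{finite,order} set"
  assumes "poset_ideal I" shows "rho I \<in> order_polytope"
  using assms unfolding order_polytope_def poset_ideal_def by auto

lemma rho_anti_C:
  fixes A :: "'a::{finite,order} set"
  assumes "antichain A" shows "rho A \<in> chain_polytope"
proof -
  have "(\<Sum>i\<in>C. rho A $ i) \<le> 1" if "chain_set C" for C
  proof -
    have "(\<Sum>i\<in>C. rho A $ i) = real (card (C \<inter> A))" by (simp add: sum.If_cases)
    moreover have "card (C \<inter> A) \<le> 1" using chain_anti_card[OF that assms] by simp
    ultimately show ?thesis by linarith
  qed
  then show ?thesis unfolding chain_polytope_def by simp
qed

lemma O_noncomp_not_edge:
  fixes I J :: "'a::{finite,order} set"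
  assumes "poset_ideal I" "poset_ideal J" "\<not> I \<subseteq> J" "\<not> J \<subseteq> I"
  shows "\<not> (convex hull {rho I, rho J} face_of order_polytope)"
proof (rule not_face)
  show "rho I \<in> order_polytope" "rho J \<in> order_polytope" using assms by (auto intro: rho_ideal_O)
  show "rho (I \<inter> J) \<in> order_polytope" "rho (I \<union> J) \<in> order_polytope"
    using assms by (auto intro!: rho_ideal_O simp: poset_ideal_def)
  show "rho I + rho J = rho (I \<inter> J) + rho (I \<union> J)" by (simp add: vec_eq_iff)
  show "rho (I \<inter> J) \<notin> closed_segment (rho I) (rho J)"
    using rho_segment assms by blast
qed

lemma O_edge_conn:
  fixes I J :: "'a::{finite,order} set"
  assumes "poset_ideal I" "poset_ideal J" "I \<subseteq> J"
    and F: "convex hull {rho I, rho J} face_of order_polytope"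
  shows "conn (J - I)"
  unfolding conn_def
proof (intro allI impI, rule ccontr)
  fix X assume X: "X \<subseteq> J - I" "X \<noteq> {}" "\<forall>u\<in>X. \<forall>v\<in>J - I. u \<le> v \<or> v \<le> u \<longrightarrow> v \<in> X" "X \<noteq> J - I"
  have i1: "poset_ideal (I \<union> X)"
    unfolding poset_ideal_def
  proof (intro allI impI)
    fix x y assume "x \<le> y" "y \<in> I \<union> X"
    then show "x \<in> I \<union> X" using assms(1,2) X unfolding poset_ideal_def by blast
  qed
  have i2: "poset_ideal (J - X)"
    unfolding poset_ideal_def
  proof (intro allI impI)
    fix x y assume xy: "x \<le> y" "y \<in> J - X"
    then have "x \<in> J" using assms(2) unfolding poset_ideal_def by blast
    moreover have "x \<notin> X"
    proof
      assume "x \<in> X"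
      then have "x \<notin> I" using X by blast
      then have "y \<notin> I" using xy assms(1) unfolding poset_ideal_def by blast
      then show False using X(3) \<open>x \<in> X\<close> xy by blast
    qed
    ultimately show "x \<in> J - X" by blast
  qed
  have "\<not> (convex hull {rho I, rho J} face_of order_polytope)"
  proof (rule not_face)
    show "rho I \<in> order_polytope" "rho J \<in> order_polytope" using assms by (auto intro: rho_ideal_O)
    show "rho (I \<union> X) \<in> order_polytope" "rho (J - X) \<in> order_polytope"
      using i1 i2 by (auto intro!: rho_ideal_O)
    show "rho I + rho J = rho (I \<union> X) + rho (J - X)" using X(1) assms(3) by (auto simp: vec_eq_iff)
    have "I \<union> X \<noteq> I" "I \<union> X \<noteq> J" using X assms(3) by auto
    then show "rho (I \<union> X) \<notin> closed_segment (rho I) (rho J)"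
      using rho_segment by blast
  qed
  then show False using F by blast
qed

lemma swap_anti:
  assumes A: "antichain A" and B: "antichain B" and X: "X \<subseteq> (A - B) \<union> (B - A)"
    and cl: "\<forall>u\<in>X. \<forall>v\<in>(A - B) \<union> (B - A). u \<le> v \<or> v \<le> u \<longrightarrow> v \<in> X"
  shows "antichain ((A - X) \<union> (B \<inter> X))"
  unfolding antichain_def
proof (intro ballI impI)
  fix x y assume x: "x \<in> (A - X) \<union> (B \<inter> X)" and y: "y \<in> (A - X) \<union> (B \<inter> X)" and xy: "x \<le> y"
  have cross: False if "p \<in> A - X" "q \<in> B \<inter> X" "p \<le> q \<or> q \<le> p" for p q
  proof (cases "p \<in> B")
    case True
    then have "p = q" using that B unfolding antichain_def by blast
    then show False using that by blast
  next
    case False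
    then have "p \<in> (A - B) \<union> (B - A)" using that by blast
    then have "p \<in> X" using cl that by blast
    then show False using that by blast
  qed
  show "x = y"
  proof (cases "x \<in> A - X")
    case xa: True
    show ?thesis
    proof (cases "y \<in> A - X")
      case True then show ?thesis using xa xy A unfolding antichain_def by blast
    next
      case False then have "y \<in> B \<inter> X" using y by blast
      then show ?thesis using cross[OF xa] xy by blast
    qed
  next
    case xb: False
    then have xb: "x \<in> B \<inter> X" using x by blast
    show ?thesis
    proof (cases "y \<in> A - X")
      case True then show ?thesis using cross[OF True xb] xy by blast
    next
      case False then have "y \<in> B \<inter> X" using y by blast
      then show ?thesis using xb xy B unfolding antichain_def by blast
    qed
  qed
qed

lemma C_edge_conn:
  fixes A B :: "'a::{finite,order} set"
  assumes "antichain A" "antichain B"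
    and F: "convex hull {rho A, rho B} face_of chain_polytope"
  shows "conn ((A - B) \<union> (B - A))"
  unfolding conn_def
proof (intro allI impI, rule ccontr)
  fix X assume X: "X \<subseteq> (A - B) \<union> (B - A)" "X \<noteq> {}"
    "\<forall>u\<in>X. \<forall>v\<in>(A - B) \<union> (B - A). u \<le> v \<or> v \<le> u \<longrightarrow> v \<in> X" "X \<noteq> (A - B) \<union> (B - A)"
  define A' where "A' = (A - X) \<union> (B \<inter> X)"
  define B' where "B' = (B - X) \<union> (A \<inter> X)"
  have a1: "antichain A'" unfolding A'_def using swap_anti[OF assms(1,2) X(1,3)] .
  have X1: "X \<subseteq> (B - A) \<union> (A - B)" using X(1) by blast
  have X3: "\<forall>u\<in>X. \<forall>v\<in>(B - A) \<union> (A - B). u \<le> v \<or> v \<le> u \<longrightarrow> v \<in> X" using X(3) by blast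
  have a2: "antichain B'" unfolding B'_def using swap_anti[OF assms(2,1) X1 X3] .
  have "\<not> (convex hull {rho A, rho B} face_of chain_polytope)"
  proof (rule not_face)
    show "rho A \<in> chain_polytope" "rho B \<in> chain_polytope" using assms by (auto intro: rho_anti_C)
    show "rho A' \<in> chain_polytope" "rho B' \<in> chain_polytope"
      using a1 a2 by (auto intro!: rho_anti_C)
    show "rho A + rho B = rho A' + rho B'" using X(1) unfolding A'_def B'_def by (auto simp: vec_eq_iff)
    have "A' \<noteq> A"
    proof -
      obtain p where "p \<in> X" using X(2) by blast
      then show ?thesis using X(1) unfolding A'_def by blast
    qed
    moreover have "A' \<noteq> B"
    proof -
      obtain p where "p \<in> (A - B) \<union> (B - A)" "p \<notin> X" using X(1,4) by blast
      then show ?thesis unfolding A'_def by blast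
    qed
    ultimately show "rho A' \<notin> closed_segment (rho A) (rho B)"
      using rho_segment by blast
  qed
  then show False using F by blast
qed

lemma conn_split:
  assumes "conn S" "X \<subseteq> S" "x \<in> X" "X \<noteq> S"
  shows "\<exists>u\<in>X. \<exists>v\<in>S. v \<notin> X \<and> (u \<le> v \<or> v \<le> u)"
  using assms unfolding conn_def by blast

lemma dir_le:
  assumes "antichain Y" "\<forall>x\<in>X. \<exists>y\<in>Y. x \<le> y" "u \<in> X" "v \<in> Y" "v \<le> u"
  shows "u = v"
proof -
  obtain y where y: "y \<in> Y" "u \<le> y" using assms(2,3) by blast
  then have "v \<le> y" using assms(5) order_trans by blast
  then have "v = y" using assms(1,4) y(1) unfolding antichain_def by blast
  then show ?thesis using y(2) assms(5) by simp
qed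

lemma up_ds:
  assumes "downset A \<subseteq> downset B" "a \<in> A"
  shows "\<exists>b\<in>B. a \<le> b"
proof -
  have "a \<in> downset A" using assms(2) unfolding downset_def by blast
  then show ?thesis using assms(1) unfolding downset_def by blast
qed

lemma chain1: "chain_set {p}" unfolding chain_set_def by simp
lemma chain2: "p \<le> q \<Longrightarrow> chain_set {p, q}" unfolding chain_set_def by auto
lemma chain3: "p \<le> q \<Longrightarrow> q \<le> r \<Longrightarrow> chain_set {p, q, r}"
  unfolding chain_set_def by (auto intro: order_trans)

lemma anti_eq: "antichain A \<Longrightarrow> x \<in> A \<Longrightarrow> y \<in> A \<Longrightarrow> x \<le> y \<or> y \<le> x \<Longrightarrow> x = y"
  unfolding antichain_def by blast

lemma comb:
  fixes A B C :: "'a::{finite,order} set" and f :: "'a \<Rightarrow> real"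
  assumes aA: "antichain A" and aB: "antichain B" and aC: "antichain C"
    and dAB: "downset A \<subseteq> downset B" and dBC: "downset B \<subseteq> downset C"
    and nAB: "downset A \<noteq> downset B" and nBC: "downset B \<noteq> downset C"
    and cAB: "conn ((A - B) \<union> (B - A))" and cBC: "conn ((B - C) \<union> (C - B))"
    and cAC: "conn ((A - C) \<union> (C - A))"
    and f0: "\<forall>i. 0 \<le> f i"
    and fle: "\<forall>ch. ch \<noteq> {} \<and> chain_set ch \<longrightarrow> sum f ch \<le> 1"
    and feq: "\<forall>ch. chain_set ch \<and> ch \<inter> A \<noteq> {} \<and> ch \<inter> B \<noteq> {} \<and> ch \<inter> C \<noteq> {} \<longrightarrow> sum f ch = 1"
    and fz: "\<forall>i. i \<notin> A \<union> B \<union> C \<longrightarrow> f i = 0"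
  shows "\<exists>\<alpha> \<beta> \<gamma>. 0 \<le> \<alpha> \<and> 0 \<le> \<beta> \<and> 0 \<le> \<gamma> \<and> \<alpha> + \<beta> + \<gamma> = 1 \<and>
     (\<forall>i. f i = \<alpha> * (if i \<in> A then 1 else 0) + \<beta> * (if i \<in> B then 1 else 0) + \<gamma> * (if i \<in> C then 1 else 0))"
proof -
  have upAB: "\<forall>x\<in>A. \<exists>y\<in>B. x \<le> y" using up_ds[OF dAB] by blast
  have upBC: "\<forall>x\<in>B. \<exists>y\<in>C. x \<le> y" using up_ds[OF dBC] by blast
  have upAC: "\<forall>x\<in>A. \<exists>y\<in>C. x \<le> y" using up_ds[OF order_trans[OF dAB dBC]] by blast
  have dirAB: "u = v" if "u \<in> A" "v \<in> B" "v \<le> u" for u v using dir_le[OF aB upAB that] .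
  have dirBC: "u = v" if "u \<in> B" "v \<in> C" "v \<le> u" for u v using dir_le[OF aC upBC that] .
  have dirAC: "u = v" if "u \<in> A" "v \<in> C" "v \<le> u" for u v using dir_le[OF aC upAC that] .
  have eqA: "x = y" if "x \<in> A" "y \<in> A" "x \<le> y \<or> y \<le> x" for x y using anti_eq[OF aA that] .
  have eqB: "x = y" if "x \<in> B" "y \<in> B" "x \<le> y \<or> y \<le> x" for x y using anti_eq[OF aB that] .
  have eqC: "x = y" if "x \<in> C" "y \<in> C" "x \<le> y \<or> y \<le> x" for x y using anti_eq[OF aC that] .
  have ACB: "x \<in> B" if xx: "x \<in> A" "x \<in> C" for x
  proof -
    obtain b where b: "b \<in> B" "x \<le> b" using upAB xx(1) by blast
    obtain c where c: "c \<in> C" "b \<le> c" using upBC b(1) by blast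
    have "x \<le> c" using b(2) c(2) by (rule order_trans)
    then have "x = c" using eqC[OF xx(2) c(1)] by blast
    then have "x = b" using b(2) c(2) by simp
    then show ?thesis using b(1) by simp
  qed
  have CBne: "C - B \<noteq> {}"
  proof
    assume "C - B = {}"
    then have "downset C \<subseteq> downset B" unfolding downset_def by blast
    then show False using dBC nBC by blast
  qed
  have BAne: "B - A \<noteq> {}"
  proof
    assume "B - A = {}"
    then have "downset B \<subseteq> downset A" unfolding downset_def by blast
    then show False using dAB nAB by blast
  qed
  have E1: "f p = 1" if "p \<in> A" "p \<in> B" "p \<in> C" for p
  proof -
    have "{p} \<inter> A \<noteq> {}" "{p} \<inter> B \<noteq> {}" "{p} \<inter> C \<noteq> {}" using that by auto
    then have "sum f {p} = 1" using feq[rule_format, of "{p}"] chain1[of p] by blast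
    then show ?thesis by simp
  qed
  have E2: "f p + f q = 1" if "p \<le> q" "p \<noteq> q" "p \<in> A \<or> q \<in> A" "p \<in> B \<or> q \<in> B" "p \<in> C \<or> q \<in> C" for p q
  proof -
    have "{p, q} \<inter> A \<noteq> {}" "{p, q} \<inter> B \<noteq> {}" "{p, q} \<inter> C \<noteq> {}" using that by auto
    then have "sum f {p, q} = 1" using feq[rule_format, of "{p, q}"] chain2[OF that(1)] by blast
    then show ?thesis using that(2) by simp
  qed
  have E3: "f p + f q + f r = 1" if "p \<le> q" "q \<le> r" "p \<noteq> q" "p \<noteq> r" "q \<noteq> r" "p \<in> A" "q \<in> B" "r \<in> C" for p q r
  proof -
    have "{p, q, r} \<inter> A \<noteq> {}" "{p, q, r} \<inter> B \<noteq> {}" "{p, q, r} \<inter> C \<noteq> {}" using that by auto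
    then have "sum f {p, q, r} = 1" using feq[rule_format, of "{p, q, r}"] chain3[OF that(1,2)] by blast
    then show ?thesis using that(3-5) by (simp add: add.assoc)
  qed
  have L1: "f p \<le> 1" for p
  proof -
    have "sum f {p} \<le> 1" using fle[rule_format, of "{p}"] chain1[of p] by blast
    then show ?thesis by simp
  qed
  have L2: "f p + f q \<le> 1" if "p \<le> q" "p \<noteq> q" for p q
  proof -
    have "sum f {p, q} \<le> 1" using fle[rule_format, of "{p, q}"] chain2[OF that(1)] by blast
    then show ?thesis using that(2) by simp
  qed
  obtain c0 where c0: "c0 \<in> C - B" using CBne by blast
  have stepa: "f c = f c0" if "c \<in> C - B" for c
  proof (cases "A - B = {}")
    case False
    have r3ex: "\<exists>r. r \<in> A - B \<and> r \<le> v" if v: "v \<in> B - A" for v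
    proof -
      obtain a0 where a0: "a0 \<in> A - B" using False by blast
      have "a0 \<notin> {v}" using a0 v by blast
      then have ne: "{v} \<noteq> (A - B) \<union> (B - A)" using a0 by blast
      have sub: "{v} \<subseteq> (A - B) \<union> (B - A)" using v by blast
      obtain u w where uw: "u \<in> {v}" "w \<in> (A - B) \<union> (B - A)" "w \<notin> {v}" "u \<le> w \<or> w \<le> u"
        using conn_split[OF cAB sub singletonI ne] by blast
      then have u: "u = v" by simp
      have cmp: "v \<le> w \<or> w \<le> v" using uw(4) u by simp
      have wv: "w \<noteq> v" using uw(3) by simp
      have "w \<notin> B - A"
      proof
        assume "w \<in> B - A"
        then have "v = w" using eqB[of v w] v cmp by blast
        then show False using wv by simp
      qed
      then have wA: "w \<in> A - B" using uw(2) by blast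
      have "\<not> v \<le> w"
      proof
        assume "v \<le> w"
        then have "w = v" using dirAB[of w v] wA v by blast
        then show False using wv by simp
      qed
      then have "w \<le> v" using cmp by blast
      then show ?thesis using wA by blast
    qed
    define r3 where "r3 v = (SOME r. r \<in> A - B \<and> r \<le> v)" for v
    have r3: "r3 v \<in> A - B" "r3 v \<le> v" if "v \<in> B - A" for v
      using someI_ex[OF r3ex[OF that]] unfolding r3_def by blast+
    define y where "y v = (if v \<in> A then f v else f v + f (r3 v))" for v
    have Ey: "y v + f w = 1" if "v \<in> B - C" "w \<in> C - B" "v \<le> w" for v w
    proof (cases "v \<in> A")
      case True
      have "v \<noteq> w" using that by blast
      moreover have "v \<in> B" "w \<in> C" using that(1,2) by blast+
      ultimately have "f v + f w = 1" using E2[of v w] that(3) True by blast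
      then show ?thesis using True unfolding y_def by simp
    next
      case vA: False
      have vBA: "v \<in> B - A" using vA that(1) by blast
      have r: "r3 v \<in> A - B" "r3 v \<le> v" using r3[OF vBA] by auto
      have "r3 v \<notin> C" using ACB r(1) by blast
      moreover have "r3 v \<noteq> v" using r(1) that(1) by auto
      moreover have "v \<noteq> w" using that(1,2) by blast
      moreover have "r3 v \<in> A" using r(1) by blast
      moreover have "v \<in> B" "w \<in> C" using that(1,2) by blast+
      ultimately have "f (r3 v) + f v + f w = 1"
        using E3[OF r(2) that(3)] by blast
      then show ?thesis using vA unfolding y_def by simp
    qed
    define X where "X = {c \<in> C - B. f c = f c0} \<union> {v \<in> B - C. y v = 1 - f c0}"
    have "X = (B - C) \<union> (C - B)"
    proof (rule connD[OF cBC])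
      show "X \<subseteq> (B - C) \<union> (C - B)" unfolding X_def by blast
      show "c0 \<in> X" using c0 unfolding X_def by blast
    next
      fix u w assume u: "u \<in> X" and w: "w \<in> (B - C) \<union> (C - B)" and uw: "u \<le> w \<or> w \<le> u"
      show "w \<in> X"
      proof (cases "u \<in> C - B")
        case uC: True
        then have fu: "f u = f c0" using u unfolding X_def by blast
        show ?thesis
        proof (cases "w \<in> C - B")
          case True
          then have "w = u" using eqC uC uw by blast
          then show ?thesis using u by simp
        next
          case False
          then have wB: "w \<in> B - C" using w by blast
          have "w \<le> u" using uw dirBC[of w u] wB uC by blast
          then have "y w + f u = 1" using Ey wB uC by blast
          then show ?thesis using wB fu unfolding X_def by auto
        qed
      next
        case uC: False
        then have uB: "u \<in> B - C" "y u = 1 - f c0" using u unfolding X_def by auto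
        show ?thesis
        proof (cases "w \<in> B - C")
          case True
          then have "w = u" using eqB uB uw by blast
          then show ?thesis using u by simp
        next
          case False
          then have wC: "w \<in> C - B" using w by blast
          have "u \<le> w" using uw dirBC[of u w] wC uB by blast
          then have "y u + f w = 1" using Ey wC uB by blast
          then show ?thesis using wC uB unfolding X_def by auto
        qed
      qed
    qed
    then show ?thesis using that unfolding X_def by blast
  next
    case True
    then have AB: "A \<subseteq> B" by blast
    define X where "X = {c \<in> C - B. f c = f c0} \<union> {v \<in> A - C. f v = 1 - f c0}"
    have "X = (A - C) \<union> (C - A)"
    proof (rule connD[OF cAC])
      show "X \<subseteq> (A - C) \<union> (C - A)" unfolding X_def using AB by blast
      show "c0 \<in> X" using c0 unfolding X_def by blast
    next
      fix u w assume u: "u \<in> X" and w: "w \<in> (A - C) \<union> (C - A)" and uw: "u \<le> w \<or> w \<le> u"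
      show "w \<in> X"
      proof (cases "u \<in> C - B")
        case uC: True
        then have fu: "f u = f c0" using u unfolding X_def by blast
        show ?thesis
        proof (cases "w \<in> C - A")
          case True
          then have "w = u" using eqC uC uw by blast
          then show ?thesis using u by simp
        next
          case False
          then have wA: "w \<in> A - C" using w by blast
          have "w \<le> u" using uw dirAC[of w u] wA uC by blast
          moreover have "w \<noteq> u" using wA uC by blast
          ultimately have "f w + f u = 1" using E2[of w u] wA uC AB by blast
          then show ?thesis using wA fu unfolding X_def by auto
        qed
      next
        case uC: False
        then have uA: "u \<in> A - C" "f u = 1 - f c0" using u unfolding X_def by auto
        show ?thesis
        proof (cases "w \<in> A - C")
          case True
          then have "w = u" using eqA uA uw by blast
          then show ?thesis using u by simp
        next
          case False
          then have wC: "w \<in> C - A" using w by blast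
          have "u \<le> w" using uw dirAC[of u w] wC uA by blast
          have wB: "w \<notin> B" using eqB[of u w] uA AB wC uw by blast
          have "u \<noteq> w" using uA wC by blast
          then have "f u + f w = 1" using E2[of u w] \<open>u \<le> w\<close> uA AB wC by blast
          then show ?thesis using wC wB uA unfolding X_def by auto
        qed
      qed
    qed
    moreover have "c \<in> (A - C) \<union> (C - A)" using that AB by blast
    ultimately show ?thesis using that unfolding X_def by blast
  qed
  define \<gamma> where "\<gamma> = f c0"
  have fC: "f c = \<gamma>" if "c \<in> C - B" for c using stepa[OF that] unfolding \<gamma>_def by simp
  have fAB: "f v = 1 - \<gamma>" if vv: "v \<in> A" "v \<in> B" "v \<notin> C" for v
  proof -
    obtain c where c: "c \<in> C" "v \<le> c" using upBC vv(2) by blast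
    have "c \<notin> B" using eqB[of v c] that c by blast
    moreover have "v \<noteq> c" using c that by blast
    ultimately have "f v + f c = 1" using E2[of v c] c that by blast
    then show ?thesis using fC c \<open>c \<notin> B\<close> by auto
  qed
  define y where "y v = (if v \<in> C then f v else f v + \<gamma>)" for v
  have Ey: "f a + y v = 1" if av: "a \<in> A - B" "v \<in> B - A" "a \<le> v" for a v
  proof (cases "v \<in> C")
    case True
    have "a \<noteq> v" using that by blast
    then have "f a + f v = 1" using E2[of a v] that True by blast
    then show ?thesis using True unfolding y_def by simp
  next
    case vC: False
    obtain c where c: "c \<in> C" "v \<le> c" using upBC av(2) by blast
    have cB: "c \<notin> B" using eqB[of v c] that c vC by blast
    have aC: "a \<notin> C" using ACB that(1) by blast
    have "a \<noteq> v" "a \<noteq> c" "v \<noteq> c" using that c cB aC vC by blast+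
    then have "f a + f v + f c = 1" using E3[OF that(3) c(2)] that c by blast
    then show ?thesis using vC fC c cB unfolding y_def by auto
  qed
  obtain b0 where b0: "b0 \<in> B - A" using BAne by blast
  define \<delta> where "\<delta> = y b0"
  define X where "X = {a \<in> A - B. f a = 1 - \<delta>} \<union> {v \<in> B - A. y v = \<delta>}"
  have XAB: "X = (A - B) \<union> (B - A)"
  proof (rule connD[OF cAB])
    show "X \<subseteq> (A - B) \<union> (B - A)" unfolding X_def by blast
    show "b0 \<in> X" using b0 unfolding X_def \<delta>_def by blast
  next
    fix u w assume u: "u \<in> X" and w: "w \<in> (A - B) \<union> (B - A)" and uw: "u \<le> w \<or> w \<le> u"
    show "w \<in> X"
    proof (cases "u \<in> A - B")
      case uA: True
      then have fu: "f u = 1 - \<delta>" using u unfolding X_def by blast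
      show ?thesis
      proof (cases "w \<in> A - B")
        case True
        then have "w = u" using eqA uA uw by blast
        then show ?thesis using u by simp
      next
        case False
        then have wB: "w \<in> B - A" using w by blast
        have "u \<le> w" using uw dirAB[of u w] wB uA by blast
        then have "f u + y w = 1" using Ey wB uA by blast
        then show ?thesis using wB fu unfolding X_def by auto
      qed
    next
      case uA: False
      then have uB: "u \<in> B - A" "y u = \<delta>" using u unfolding X_def by auto
      show ?thesis
      proof (cases "w \<in> B - A")
        case True
        then have "w = u" using eqB uB uw by blast
        then show ?thesis using u by simp
      next
        case False
        then have wA: "w \<in> A - B" using w by blast
        have "w \<le> u" using uw dirAB[of w u] wA uB by blast
        then have "f w + y u = 1" using Ey wA uB by blast
        then show ?thesis using wA uB unfolding X_def by auto
      qed
    qed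
  qed
  have fA: "f a = 1 - \<delta>" if "a \<in> A - B" for a using that XAB unfolding X_def by blast
  have yB: "y v = \<delta>" if "v \<in> B - A" for v using that XAB unfolding X_def by blast
  have g0: "0 \<le> \<gamma>" using f0 unfolding \<gamma>_def by simp
  have d1: "\<delta> \<le> 1"
  proof (cases "b0 \<in> C")
    case True
    then show ?thesis using L1[of b0] unfolding \<delta>_def y_def by simp
  next
    case False
    obtain c where c: "c \<in> C" "b0 \<le> c" using upBC b0 by blast
    have cB: "c \<notin> B" using eqB[of b0 c] b0 c False by blast
    have "b0 \<noteq> c" using False c by blast
    then have "f b0 + f c \<le> 1" using L2 c by blast
    then show ?thesis using False fC c cB unfolding \<delta>_def y_def by auto
  qed
  have dg: "\<gamma> \<le> \<delta>"
  proof (cases "\<exists>v. v \<in> B - A \<and> v \<notin> C")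
    case True
    then obtain v where v: "v \<in> B - A" "v \<notin> C" by blast
    then have "\<delta> = f v + \<gamma>" using yB[OF v(1)] unfolding y_def by simp
    then show ?thesis using f0 by (metis le_add_same_cancel2)
  next
    case False
    then have b0C: "b0 \<in> C" using b0 by blast
    define Z where "Z = (A - B) \<union> ((B \<inter> C) - A)"
    have "Z \<subseteq> (A - C) \<union> (C - A)" unfolding Z_def using ACB by blast
    moreover have "b0 \<in> Z" using b0 b0C unfolding Z_def by blast
    moreover have "Z \<noteq> (A - C) \<union> (C - A)"
    proof
      assume "Z = (A - C) \<union> (C - A)"
      moreover have "c0 \<in> (A - C) \<union> (C - A)" using c0 ACB by blast
      moreover have "c0 \<notin> Z" using c0 ACB unfolding Z_def by blast
      ultimately show False by blast
    qed
    ultimately obtain u w where uw: "u \<in> Z" "w \<in> (A - C) \<union> (C - A)" "w \<notin> Z" "u \<le> w \<or> w \<le> u"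
      using conn_split[OF cAC] by blast
    have "\<exists>a c. a \<in> A - B \<and> c \<in> C - B \<and> a \<le> c"
    proof (cases "u \<in> A - B")
      case uA: True
      show ?thesis
      proof (cases "w \<in> A")
        case True
        then have "w = u" using eqA uA uw by blast
        then show ?thesis using uw by blast
      next
        case False
        then have wC: "w \<in> C - B" using uw unfolding Z_def by blast
        have "u \<le> w" using uw dirAC[of u w] wC uA by blast
        then show ?thesis using uA wC by blast
      qed
    next
      case uA: False
      then have uBC: "u \<in> B" "u \<in> C" "u \<notin> A" using uw unfolding Z_def by auto
      show ?thesis
      proof (cases "w \<in> A")
        case True
        then have "w \<in> B" using uw unfolding Z_def by blast
        then have "w = u" using eqB uBC uw by blast
        then show ?thesis using uw by blast
      next
        case False
        then have "w \<in> C" using uw by blast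
        then have "w = u" using eqC uBC uw by blast
        then show ?thesis using uw by blast
      qed
    qed
    then obtain a c where ac: "a \<in> A - B" "c \<in> C - B" "a \<le> c" by blast
    have "a \<noteq> c" using ac ACB by blast
    then have "f a + f c \<le> 1" using L2 ac by blast
    then show ?thesis using fA[OF ac(1)] fC[OF ac(2)] by simp
  qed
  show ?thesis
  proof (intro exI conjI allI)
    show "0 \<le> 1 - \<delta>" using d1 by simp
    show "0 \<le> \<delta> - \<gamma>" using dg by simp
    show "0 \<le> \<gamma>" by (rule g0)
    show "1 - \<delta> + (\<delta> - \<gamma>) + \<gamma> = 1" by simp
    fix i
    show "f i = (1 - \<delta>) * (if i \<in> A then 1 else 0) + (\<delta> - \<gamma>) * (if i \<in> B then 1 else 0) + \<gamma> * (if i \<in> C then 1 else 0)"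
    proof (cases "i \<in> A")
      case iA: True
      show ?thesis
      proof (cases "i \<in> B")
        case iB: True
        show ?thesis
        proof (cases "i \<in> C")
          case True then show ?thesis using E1 iA iB by simp
        next
          case False then show ?thesis using fAB iA iB by simp
        qed
      next
        case iB: False
        then have "i \<notin> C" using ACB iA by blast
        then show ?thesis using fA iA iB by simp
      qed
    next
      case iA: False
      show ?thesis
      proof (cases "i \<in> B")
        case iB: True
        show ?thesis
          using yB[of i] iA iB unfolding y_def by (auto split: if_splits)
      next
        case iB: False
        show ?thesis
        proof (cases "i \<in> C")
          case True then show ?thesis using fC iA iB by simp
        next
          case False then show ?thesis using fz iA iB by simp
        qed
      qed
    qed
  qed
qed

lemma tight_le:
  fixes a b c t :: real
  assumes "a \<le> c" "b \<le> c" "0 < t" "t < 1" "(1 - t) * a + t * b = c"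
  shows "a = c"
proof -
  have "(1 - t) * (c - a) + t * (c - b) = 0" using assms(5) by (simp add: algebra_simps)
  moreover have "0 \<le> (1 - t) * (c - a)" "0 \<le> t * (c - b)" using assms by simp_all
  ultimately have "(1 - t) * (c - a) = 0" by linarith
  then show ?thesis using assms(4) by simp
qed

lemma tight_ge:
  fixes a b c t :: real
  assumes "c \<le> a" "c \<le> b" "0 < t" "t < 1" "(1 - t) * a + t * b = c"
  shows "a = c"
proof -
  have "(-a) = (-c)"
    by (rule tight_le[of "-a" "-c" "-b" t]) (use assms in \<open>simp_all add: algebra_simps\<close>)
  then show ?thesis by simp
qed

lemma convex_O: "convex (order_polytope :: (real^'a::{finite,order}) set)"
proof (rule convexI)
  fix x y :: "real^'a::{finite,order}" and u v :: real
  assume x: "x \<in> order_polytope" and y: "y \<in> order_polytope" and uv0: "0 \<le> u" "0 \<le> v" "u + v = 1"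
  have uv: "0 \<le> u \<and> 0 \<le> v \<and> u + v = 1" using uv0 by simp
  have x1: "\<forall>i. 0 \<le> x$i \<and> x$i \<le> 1" "\<forall>i j. i \<le> j \<longrightarrow> x$j \<le> x$i" using x unfolding order_polytope_def by auto
  have y1: "\<forall>i. 0 \<le> y$i \<and> y$i \<le> 1" "\<forall>i j. i \<le> j \<longrightarrow> y$j \<le> y$i" using y unfolding order_polytope_def by auto
  have "0 \<le> u * x$i + v * y$i" for i using x1 y1 uv by simp
  moreover have "u * x$i + v * y$i \<le> 1" for i
  proof -
    have "u * x$i \<le> u * 1" using x1 uv by (intro mult_left_mono) auto
    moreover have "v * y$i \<le> v * 1" using y1 uv by (intro mult_left_mono) auto
    ultimately show ?thesis using uv by linarith
  qed
  moreover have "u * x$j + v * y$j \<le> u * x$i + v * y$i" if "i \<le> j" for i j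
  proof -
    have "u * x$j \<le> u * x$i" using x1 uv that by (intro mult_left_mono) auto
    moreover have "v * y$j \<le> v * y$i" using y1 uv that by (intro mult_left_mono) auto
    ultimately show ?thesis by linarith
  qed
  ultimately show "u *\<^sub>R x + v *\<^sub>R y \<in> order_polytope" unfolding order_polytope_def by simp
qed

lemma sum_lin:
  fixes x y :: "real^'a::finite"
  shows "(\<Sum>i\<in>ch. (u *\<^sub>R x + v *\<^sub>R y) $ i) = u * (\<Sum>i\<in>ch. x$i) + v * (\<Sum>i\<in>ch. y$i)"
  by (simp add: sum.distrib sum_distrib_left)

lemma convex_C: "convex (chain_polytope :: (real^'a::{finite,order}) set)"
proof (rule convexI)
  fix x y :: "real^'a::{finite,order}" and u v :: real
  assume x: "x \<in> chain_polytope" and y: "y \<in> chain_polytope" and uv0: "0 \<le> u" "0 \<le> v" "u + v = 1"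
  have uv: "0 \<le> u \<and> 0 \<le> v \<and> u + v = 1" using uv0 by simp
  have x1: "\<forall>i. 0 \<le> x$i" "\<forall>C. C \<noteq> {} \<and> chain_set C \<longrightarrow> (\<Sum>i\<in>C. x$i) \<le> 1" using x unfolding chain_polytope_def by auto
  have y1: "\<forall>i. 0 \<le> y$i" "\<forall>C. C \<noteq> {} \<and> chain_set C \<longrightarrow> (\<Sum>i\<in>C. y$i) \<le> 1" using y unfolding chain_polytope_def by auto
  have "0 \<le> (u *\<^sub>R x + v *\<^sub>R y) $ i" for i using x1 y1 uv by simp
  moreover have "(\<Sum>i\<in>C. (u *\<^sub>R x + v *\<^sub>R y) $ i) \<le> 1" if "C \<noteq> {}" "chain_set C" for C
  proof -
    have "u * (\<Sum>i\<in>C. x$i) \<le> u * 1" using x1 uv that by (intro mult_left_mono) auto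
    moreover have "v * (\<Sum>i\<in>C. y$i) \<le> v * 1" using y1 uv that by (intro mult_left_mono) auto
    ultimately show ?thesis using uv sum_lin[of u x v y C] by linarith
  qed
  ultimately show "u *\<^sub>R x + v *\<^sub>R y \<in> chain_polytope" unfolding chain_polytope_def by blast
qed

lemma hull3_mem:
  assumes "0 \<le> u" "0 \<le> v" "0 \<le> w" "u + v + w = 1"
  shows "u *\<^sub>R a + v *\<^sub>R b + w *\<^sub>R c \<in> convex hull {a, b, c}"
  unfolding convex_hull_3 using assms by blast

lemma key_O:
  fixes I J K :: "'a::{finite,order} set"
  assumes iI: "poset_ideal I" and iJ: "poset_ideal J" and iK: "poset_ideal K"
    and IJ: "I \<subseteq> J" and JK: "J \<subseteq> K" and cJI: "conn (J - I)" and cKJ: "conn (K - J)"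
    and p: "p \<in> J - I" and q: "q \<in> K - J" and pq: "p \<le> q"
    and a: "a \<in> order_polytope" and b: "b \<in> order_polytope"
    and z: "z \<in> convex hull {rho I, rho J, rho K}" and zs: "z \<in> open_segment a b"
  shows "a \<in> convex hull {rho I, rho J, rho K}"
proof -
  obtain u v w where uvw: "0 \<le> u" "0 \<le> v" "0 \<le> w" "u + v + w = 1"
    and zuvw: "z = u *\<^sub>R rho I + v *\<^sub>R rho J + w *\<^sub>R rho K"
    using z unfolding convex_hull_3 by blast
  obtain t where t: "0 < t" "t < 1" and zt: "z = (1 - t) *\<^sub>R a + t *\<^sub>R b"
    using zs unfolding in_segment by blast
  have zc: "z$i = u * (if i \<in> I then 1 else 0) + v * (if i \<in> J then 1 else 0) + w * (if i \<in> K then 1 else 0)" for i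
    using zuvw by simp
  have zab: "z$i = (1 - t) * a$i + t * b$i" for i using zt by simp
  have a1: "0 \<le> a$i" "a$i \<le> 1" for i using a unfolding order_polytope_def by auto
  have a2: "a$j \<le> a$i" if "i \<le> j" for i j using a that unfolding order_polytope_def by auto
  have b1: "0 \<le> b$i" "b$i \<le> 1" for i using b unfolding order_polytope_def by auto
  have b2: "b$j \<le> b$i" if "i \<le> j" for i j using b that unfolding order_polytope_def by auto
  have onI: "a$i = 1" if "i \<in> I" for i
  proof (rule tight_le[OF a1(2) b1(2) t])
    have "z$i = 1" using zc[of i] that IJ JK uvw(4) by auto
    then show "(1 - t) * a $ i + t * b $ i = 1" using zab[of i] by simp
  qed
  have offK: "a$i = 0" if "i \<notin> K" for i
  proof (rule tight_ge[OF a1(1) b1(1) t])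
    have "z$i = 0" using zc[of i] that IJ JK by auto
    then show "(1 - t) * a $ i + t * b $ i = 0" using zab[of i] by simp
  qed
  have eqdiff: "a$i = a$j" if "i \<le> j" "z$i = z$j" for i j
  proof -
    have "a$j - a$i = 0"
    proof (rule tight_le[of _ 0 "b$j - b$i" t])
      show "a$j - a$i \<le> 0" "b$j - b$i \<le> 0" using a2[OF that(1)] b2[OF that(1)] by simp_all
      show "0 < t" "t < 1" by (rule t)+
      show "(1 - t) * (a $ j - a $ i) + t * (b $ j - b $ i) = 0"
        using zab[of i] zab[of j] that(2) by (simp add: algebra_simps)
    qed
    then show ?thesis by simp
  qed
  have const: "a$i = a$r" if S: "conn S" "r \<in> S" "i \<in> S" and Sz: "\<And>i j. i \<in> S \<Longrightarrow> j \<in> S \<Longrightarrow> z$i = z$j" for S r i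
  proof -
    have "{k \<in> S. a$k = a$r} = S"
    proof (rule connD[OF S(1)])
      show "{k \<in> S. a$k = a$r} \<subseteq> S" by blast
      show "r \<in> {k \<in> S. a$k = a$r}" using S(2) by blast
    next
      fix x y assume x: "x \<in> {k \<in> S. a$k = a$r}" and y: "y \<in> S" and xy: "x \<le> y \<or> y \<le> x"
      have "z$x = z$y" using Sz x y by blast
      then have "a$x = a$y"
      proof (cases "x \<le> y")
        case True then show ?thesis using eqdiff[of x y] \<open>z$x = z$y\<close> by blast
      next
        case False then have "y \<le> x" using xy by blast
        then show ?thesis using eqdiff[of y x] \<open>z$x = z$y\<close> by simp
      qed
      then show "y \<in> {k \<in> S. a$k = a$r}" using x y by simp
    qed
    then show ?thesis using S(3) by blast
  qed
  have zJI: "z$i = z$j" if "i \<in> J - I" "j \<in> J - I" for i j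
    using zc[of i] zc[of j] that JK by auto
  have zKJ: "z$i = z$j" if "i \<in> K - J" "j \<in> K - J" for i j
    using zc[of i] zc[of j] that IJ by auto
  have cJ: "a$i = a$p" if "i \<in> J - I" for i using const[OF cJI p that zJI] by blast
  have cK: "a$i = a$q" if "i \<in> K - J" for i using const[OF cKJ q that zKJ] by blast
  define \<alpha> where "\<alpha> = a$p"
  define \<beta> where "\<beta> = a$q"
  have "a = (1 - \<alpha>) *\<^sub>R rho I + (\<alpha> - \<beta>) *\<^sub>R rho J + \<beta> *\<^sub>R rho K"
    unfolding vec_eq_iff
  proof (intro allI)
    fix i
    show "a$i = ((1 - \<alpha>) *\<^sub>R rho I + (\<alpha> - \<beta>) *\<^sub>R rho J + \<beta> *\<^sub>R rho K) $ i"
    proof (cases "i \<in> I")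
      case True then show ?thesis using onI[OF True] IJ JK by auto
    next
      case nI: False
      show ?thesis
      proof (cases "i \<in> J")
        case True then show ?thesis using cJ[of i] nI JK unfolding \<alpha>_def by auto
      next
        case nJ: False
        show ?thesis
        proof (cases "i \<in> K")
          case True then show ?thesis using cK[of i] nI nJ unfolding \<beta>_def by auto
        next
          case False then show ?thesis using offK[OF False] nI nJ by auto
        qed
      qed
    qed
  qed
  moreover have "0 \<le> 1 - \<alpha>" using a1(2)[of p] unfolding \<alpha>_def by simp
  moreover have "0 \<le> \<alpha> - \<beta>" using a2[OF pq] unfolding \<alpha>_def \<beta>_def by simp
  moreover have "0 \<le> \<beta>" using a1(1)[of q] unfolding \<beta>_def by simp
  ultimately show ?thesis using hull3_mem[of "1 - \<alpha>" "\<alpha> - \<beta>" \<beta>] by simp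
qed

lemma O_tri_face:
  fixes I J K :: "'a::{finite,order} set"
  assumes iI: "poset_ideal I" and iJ: "poset_ideal J" and iK: "poset_ideal K"
    and IJ: "I \<subset> J" and JK: "J \<subset> K" and cJI: "conn (J - I)" and cKJ: "conn (K - J)"
    and p: "p \<in> J - I" and q: "q \<in> K - J" and pq: "p \<le> q"
  shows "is_2face order_polytope (rho I) (rho J) (rho K)"
  unfolding is_2face_def
proof
  show "aff_dim (convex hull {rho I, rho J, rho K}) = 2"
    using IJ JK by (intro rho_affdim3) auto
  show "convex hull {rho I, rho J, rho K} face_of order_polytope"
    unfolding face_of_def
  proof (intro conjI ballI impI)
    show "convex hull {rho I, rho J, rho K} \<subseteq> order_polytope"
      by (rule hull_minimal) (use iI iJ iK rho_ideal_O convex_O in auto)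
    show "convex (convex hull {rho I, rho J, rho K})" by (rule convex_convex_hull)
    fix a b z assume a: "a \<in> order_polytope" and b: "b \<in> order_polytope"
      and z: "z \<in> convex hull {rho I, rho J, rho K}" and zs: "z \<in> open_segment a b"
    show "a \<in> convex hull {rho I, rho J, rho K}"
      using key_O[OF iI iJ iK _ _ cJI cKJ p q pq a b z zs] IJ JK by blast
    have zs': "z \<in> open_segment b a" using zs by (simp add: open_segment_commute)
    show "b \<in> convex hull {rho I, rho J, rho K}"
      using key_O[OF iI iJ iK _ _ cJI cKJ p q pq b a z zs'] IJ JK by blast
  qed
qed

lemma sum3lin:
  fixes A B C :: "'a::finite set"
  shows "(\<Sum>i\<in>ch. (u *\<^sub>R rho A + v *\<^sub>R rho B + w *\<^sub>R rho C) $ i)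
     = u * real (card (ch \<inter> A)) + v * real (card (ch \<inter> B)) + w * real (card (ch \<inter> C))"
proof -
  have "(\<Sum>i\<in>ch. (u *\<^sub>R rho A + v *\<^sub>R rho B + w *\<^sub>R rho C) $ i)
      = u * (\<Sum>i\<in>ch. rho A $ i) + v * (\<Sum>i\<in>ch. rho B $ i) + w * (\<Sum>i\<in>ch. rho C $ i)"
    by (simp del: rho_nth add: sum.distrib sum_distrib_left)
  then show ?thesis by (simp only: sum_rho[OF finite])
qed

lemma hull2_sub3:
  "convex hull {a, b} \<subseteq> convex hull {a, b, c}" "convex hull {b, c} \<subseteq> convex hull {a, b, c}"
  "convex hull {a, c} \<subseteq> convex hull {a, b, c}"
  by (rule hull_mono, blast)+

lemma hull2_mem:
  assumes "0 \<le> u" "0 \<le> v" "u + v = 1"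
  shows "u *\<^sub>R a + v *\<^sub>R b \<in> convex hull {a, b}"
  unfolding convex_hull_2 using assms by blast

lemma key_C:
  fixes A B C :: "'a::{finite,order} set"
  assumes aA: "antichain A" and aB: "antichain B" and aC: "antichain C"
    and dAB: "downset A \<subseteq> downset B" and dBC: "downset B \<subseteq> downset C"
    and nAB: "downset A \<noteq> downset B" and nBC: "downset B \<noteq> downset C"
    and cAB: "conn ((A - B) \<union> (B - A))" and cBC: "conn ((B - C) \<union> (C - B))"
    and cAC: "conn ((A - C) \<union> (C - A))"
    and fAB: "convex hull {rho A, rho B} face_of chain_polytope"
    and fBC: "convex hull {rho B, rho C} face_of chain_polytope"
    and fAC: "convex hull {rho A, rho C} face_of chain_polytope"
    and a: "a \<in> chain_polytope" and b: "b \<in> chain_polytope"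
    and z: "z \<in> convex hull {rho A, rho B, rho C}" and zs: "z \<in> open_segment a b"
  shows "a \<in> convex hull {rho A, rho B, rho C}"
proof -
  obtain u v w where uvw: "0 \<le> u" "0 \<le> v" "0 \<le> w" "u + v + w = 1"
    and zuvw: "z = u *\<^sub>R rho A + v *\<^sub>R rho B + w *\<^sub>R rho C"
    using z unfolding convex_hull_3 by blast
  obtain t where t: "0 < t" "t < 1" and zt: "z = (1 - t) *\<^sub>R a + t *\<^sub>R b"
    using zs unfolding in_segment by blast
  have zab: "z$i = (1 - t) * a$i + t * b$i" for i using zt by simp
  have a1: "\<forall>i. 0 \<le> a$i" "\<forall>ch. ch \<noteq> {} \<and> chain_set ch \<longrightarrow> (\<Sum>i\<in>ch. a$i) \<le> 1"
    using a unfolding chain_polytope_def by auto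
  have b1: "\<forall>i. 0 \<le> b$i" "\<forall>ch. ch \<noteq> {} \<and> chain_set ch \<longrightarrow> (\<Sum>i\<in>ch. b$i) \<le> 1"
    using b unfolding chain_polytope_def by auto
  consider "u = 0" | "v = 0" | "w = 0" | "0 < u" "0 < v" "0 < w" using uvw by linarith
  then show ?thesis
  proof cases
    case 1
    then have "z \<in> convex hull {rho B, rho C}" using zuvw uvw hull2_mem[of v w] by simp
    then have "a \<in> convex hull {rho B, rho C}" using face_ofD[OF fBC zs a b] by blast
    then show ?thesis using hull2_sub3 by blast
  next
    case 2
    then have "z \<in> convex hull {rho A, rho C}" using zuvw uvw hull2_mem[of u w] by simp
    then have "a \<in> convex hull {rho A, rho C}" using face_ofD[OF fAC zs a b] by blast
    then show ?thesis using hull2_sub3 by blast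
  next
    case 3
    then have "z \<in> convex hull {rho A, rho B}" using zuvw uvw hull2_mem[of u v] by simp
    then have "a \<in> convex hull {rho A, rho B}" using face_ofD[OF fAB zs a b] by blast
    then show ?thesis using hull2_sub3 by blast
  next
    case 4
    have feq: "\<forall>ch. chain_set ch \<and> ch \<inter> A \<noteq> {} \<and> ch \<inter> B \<noteq> {} \<and> ch \<inter> C \<noteq> {} \<longrightarrow> sum (\<lambda>i. a$i) ch = 1"
    proof (intro allI impI)
      fix ch :: "'a set" assume ch: "chain_set ch \<and> ch \<inter> A \<noteq> {} \<and> ch \<inter> B \<noteq> {} \<and> ch \<inter> C \<noteq> {}"
      have cA: "card (ch \<inter> A) = 1" using chain_anti_card1[OF _ aA] ch by simp
      have cB: "card (ch \<inter> B) = 1" using chain_anti_card1[OF _ aB] ch by simp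
      have cC: "card (ch \<inter> C) = 1" using chain_anti_card1[OF _ aC] ch by simp
      have "(\<Sum>i\<in>ch. z $ i) = 1" unfolding zuvw sum3lin cA cB cC using uvw(4) by simp
      moreover have "(\<Sum>i\<in>ch. z $ i) = (1 - t) * (\<Sum>i\<in>ch. a $ i) + t * (\<Sum>i\<in>ch. b $ i)"
        unfolding zt by (rule sum_lin)
      moreover have "ch \<noteq> {}" using ch by blast
      then have "(\<Sum>i\<in>ch. a$i) \<le> 1" "(\<Sum>i\<in>ch. b$i) \<le> 1" using a1(2) b1(2) ch by blast+
      ultimately show "sum (\<lambda>i. a$i) ch = 1" using tight_le[OF _ _ t] by metis
    qed
    have fz: "\<forall>i. i \<notin> A \<union> B \<union> C \<longrightarrow> a$i = 0"
    proof (intro allI impI)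
      fix i assume i: "i \<notin> A \<union> B \<union> C"
      have "z$i = 0" using i zuvw by simp
      then show "a$i = 0" using tight_ge[of 0 "a$i" "b$i" t] a1(1) b1(1) t zab[of i] by simp
    qed
    obtain \<alpha> \<beta> \<gamma> where abc: "0 \<le> \<alpha>" "0 \<le> \<beta>" "0 \<le> \<gamma>" "\<alpha> + \<beta> + \<gamma> = 1"
      and fa: "\<forall>i. a$i = \<alpha> * (if i \<in> A then 1 else 0) + \<beta> * (if i \<in> B then 1 else 0) + \<gamma> * (if i \<in> C then 1 else 0)"
      using comb[OF aA aB aC dAB dBC nAB nBC cAB cBC cAC a1(1) a1(2) feq fz] by blast
    have "a = \<alpha> *\<^sub>R rho A + \<beta> *\<^sub>R rho B + \<gamma> *\<^sub>R rho C"
      unfolding vec_eq_iff using fa by simp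
    then show ?thesis using hull3_mem[OF abc] by simp
  qed
qed

lemma C_tri_face:
  fixes A B C :: "'a::{finite,order} set"
  assumes aA: "antichain A" and aB: "antichain B" and aC: "antichain C"
    and dAB: "downset A \<subseteq> downset B" and dBC: "downset B \<subseteq> downset C"
    and nAB: "downset A \<noteq> downset B" and nBC: "downset B \<noteq> downset C"
    and cAB: "conn ((A - B) \<union> (B - A))" and cBC: "conn ((B - C) \<union> (C - B))"
    and cAC: "conn ((A - C) \<union> (C - A))"
    and fAB: "convex hull {rho A, rho B} face_of chain_polytope"
    and fBC: "convex hull {rho B, rho C} face_of chain_polytope"
    and fAC: "convex hull {rho A, rho C} face_of chain_polytope"
  shows "is_2face chain_polytope (rho A) (rho B) (rho C)"
  unfolding is_2face_def
proof
  have "A \<noteq> B" using nAB by blast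
  moreover have "B \<noteq> C" using nBC by blast
  moreover have "A \<noteq> C" using nAB dAB dBC by blast
  ultimately show "aff_dim (convex hull {rho A, rho B, rho C}) = 2"
    by (intro rho_affdim3) auto
  show "convex hull {rho A, rho B, rho C} face_of chain_polytope"
    unfolding face_of_def
  proof (intro conjI ballI impI)
    show "convex hull {rho A, rho B, rho C} \<subseteq> chain_polytope"
      by (rule hull_minimal) (use aA aB aC rho_anti_C convex_C in auto)
    show "convex (convex hull {rho A, rho B, rho C})" by (rule convex_convex_hull)
    fix a b z assume a: "a \<in> chain_polytope" and b: "b \<in> chain_polytope"
      and z: "z \<in> convex hull {rho A, rho B, rho C}" and zs: "z \<in> open_segment a b"
    show "a \<in> convex hull {rho A, rho B, rho C}"
      by (rule key_C[OF assms a b z zs])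
    have zs': "z \<in> open_segment b a" using zs by (simp add: open_segment_commute)
    show "b \<in> convex hull {rho A, rho B, rho C}"
      by (rule key_C[OF assms b a z zs'])
  qed
qed

lemma maxel_anti: "antichain (maxel I)"
  unfolding antichain_def maxel_def by blast

lemma down_ideal: "poset_ideal (downset A)"
  unfolding poset_ideal_def downset_def using order_trans by blast

lemma down_max:
  fixes I :: "'a::{finite,order} set"
  assumes "poset_ideal I" shows "downset (maxel I) = I"
proof
  show "downset (maxel I) \<subseteq> I" using assms unfolding downset_def maxel_def poset_ideal_def by blast
  show "I \<subseteq> downset (maxel I)"
  proof
    fix x assume x: "x \<in> I"
    obtain m where m: "m \<in> I" "x \<le> m" "\<forall>b\<in>I. m \<le> b \<longrightarrow> m = b"
      using finite_has_maximal2[OF finite x] by blast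
    then have "m \<in> maxel I" unfolding maxel_def by blast
    then show "x \<in> downset (maxel I)" using m(2) unfolding downset_def by blast
  qed
qed

lemma max_down:
  assumes "antichain A" shows "maxel (downset A) = A"
proof
  show "maxel (downset A) \<subseteq> A"
  proof
    fix x assume "x \<in> maxel (downset A)"
    then have x: "x \<in> downset A" "\<forall>y\<in>downset A. x \<le> y \<longrightarrow> x = y" unfolding maxel_def by auto
    then obtain p where p: "p \<in> A" "x \<le> p" unfolding downset_def by blast
    then have "p \<in> downset A" unfolding downset_def by blast
    then have "x = p" using x(2) p(2) by blast
    then show "x \<in> A" using p(1) by simp
  qed
  show "A \<subseteq> maxel (downset A)"
  proof
    fix p assume p: "p \<in> A"
    have "p \<in> downset A" using p unfolding downset_def by blast
    moreover have "p = y" if yy: "y \<in> downset A" "p \<le> y" for y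
    proof -
      obtain p' where p': "p' \<in> A" "y \<le> p'" using yy(1) unfolding downset_def by blast
      have "p \<le> p'" using yy(2) p'(2) by (rule order_trans)
      then have "p = p'" using assms p p'(1) unfolding antichain_def by blast
      then show ?thesis using yy(2) p'(2) by simp
    qed
    ultimately show "p \<in> maxel (downset A)" unfolding maxel_def by blast
  qed
qed

lemma is_edge_sym: "is_edge S a b = is_edge S b a"
  unfolding is_edge_def by (simp add: insert_commute)

lemma is_2face_perm:
  assumes "is_2face S a b c" "{a', b', c'} = {a, b, c}"
  shows "is_2face S a' b' c'"
  using assms unfolding is_2face_def by simp

lemma O_edge_struct:
  fixes I J :: "'a::{finite,order} set"
  assumes iI: "poset_ideal I" and iJ: "poset_ideal J" and ne: "I \<noteq> J"
    and e: "is_edge order_polytope (rho I) (rho J)"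
  shows "(I \<subset> J \<and> conn (J - I)) \<or> (J \<subset> I \<and> conn (I - J))"
proof -
  have F: "convex hull {rho I, rho J} face_of order_polytope" using e unfolding is_edge_def by blast
  have F': "convex hull {rho J, rho I} face_of order_polytope" using F by (simp add: insert_commute)
  show ?thesis
  proof (cases "I \<subseteq> J")
    case True
    then show ?thesis using O_edge_conn[OF iI iJ True F] ne by blast
  next
    case False
    show ?thesis
    proof (cases "J \<subseteq> I")
      case True
      then show ?thesis using O_edge_conn[OF iJ iI True F'] ne by blast
    next
      case False2: False
      then show ?thesis using O_noncomp_not_edge[OF iI iJ False False2] F by blast
    qed
  qed
qed

lemma sort3:
  assumes "I \<noteq> J" "J \<noteq> K" "I \<noteq> K"
    and "I \<subseteq> J \<or> J \<subseteq> I" "J \<subseteq> K \<or> K \<subseteq> J" "I \<subseteq> K \<or> K \<subseteq> I"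
  shows "\<exists>X Y Z. {I, J, K} = {X, Y, Z} \<and> X \<subset> Y \<and> Y \<subset> Z"
proof -
  have w: "\<exists>X Y Z. {I, J, K} = {X, Y, Z} \<and> X \<subset> Y \<and> Y \<subset> Z" if "{I, J, K} = {X, Y, Z}" "X \<subset> Y" "Y \<subset> Z" for X Y Z
    using that by blast
  show ?thesis
  proof (cases "I \<subseteq> J")
    case IJ: True
    show ?thesis
    proof (cases "J \<subseteq> K")
      case True then show ?thesis using w[of I J K] IJ assms by blast
    next
      case False then have KJ: "K \<subseteq> J" using assms by blast
      show ?thesis
      proof (cases "I \<subseteq> K")
        case True then show ?thesis using w[of I K J] IJ KJ assms by (auto simp: insert_commute)
      next
        case False then have "K \<subseteq> I" using assms by blast
        then show ?thesis using w[of K I J] IJ KJ assms by (auto simp: insert_commute)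
      qed
    qed
  next
    case False then have JI: "J \<subseteq> I" using assms by blast
    show ?thesis
    proof (cases "K \<subseteq> J")
      case True then show ?thesis using w[of K J I] JI assms by (auto simp: insert_commute)
    next
      case False then have JK: "J \<subseteq> K" using assms by blast
      show ?thesis
      proof (cases "I \<subseteq> K")
        case True then show ?thesis using w[of J I K] JI JK assms by (auto simp: insert_commute)
      next
        case False then have "K \<subseteq> I" using assms by blast
        then show ?thesis using w[of J K I] JI JK assms by (auto simp: insert_commute)
      qed
    qed
  qed
qed

lemma cross:
  assumes iY: "poset_ideal Y" and XY: "X \<subset> Y" and YZ: "Y \<subset> Z" and c: "conn (Z - X)"
  shows "\<exists>p\<in>Y - X. \<exists>q\<in>Z - Y. p \<le> q"
proof -
  obtain x where x: "x \<in> Y - X" using psubset_imp_ex_mem[OF XY] by blast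
  obtain z where z: "z \<in> Z - Y" using psubset_imp_ex_mem[OF YZ] by blast
  have XY': "X \<subseteq> Y" "Y \<subseteq> Z" using XY YZ by auto
  have sub: "Y - X \<subseteq> Z - X" using XY' by auto
  have "z \<in> Z - X" "z \<notin> Y - X" using z XY' by auto
  then have ne: "Y - X \<noteq> Z - X" by auto
  obtain u v where uv: "u \<in> Y - X" "v \<in> Z - X" "v \<notin> Y - X" "u \<le> v \<or> v \<le> u"
    using conn_split[OF c sub x ne] by blast
  have vY: "v \<in> Z - Y" using uv(2,3) by auto
  have "\<not> v \<le> u"
  proof
    assume vu: "v \<le> u"
    have "u \<in> Y" using uv(1) by auto
    then have "v \<in> Y" using iY vu unfolding poset_ideal_def by blast
    then show False using vY by auto
  qed
  then have "u \<le> v" using uv(4) by auto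
  then show ?thesis using uv(1) vY by auto
qed

lemma tri_edges:
  fixes I J K :: "'b::finite set"
  assumes n: "I \<noteq> J" "J \<noteq> K" "I \<noteq> K" and F: "is_2face S (rho I) (rho J) (rho K)"
    and U: "U \<in> {I, J, K}" and V: "V \<in> {I, J, K}" and UV: "U \<noteq> V"
  shows "is_edge S (rho U) (rho V)"
proof -
  have e1: "is_edge S (rho I) (rho J)" using face_edge[OF n(1) n(3) n(2) F] .
  have F2: "is_2face S (rho J) (rho K) (rho I)" by (rule is_2face_perm[OF F]) (simp add: insert_commute)
  have e2: "is_edge S (rho J) (rho K)" using face_edge[OF n(2) n(1)[symmetric] n(3)[symmetric] F2] .
  have F3: "is_2face S (rho I) (rho K) (rho J)" by (rule is_2face_perm[OF F]) (simp add: insert_commute)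
  have e3: "is_edge S (rho I) (rho K)" using face_edge[OF n(3) n(1) n(2)[symmetric] F3] .
  have U': "U = I \<or> U = J \<or> U = K" using U by simp
  have V': "V = I \<or> V = J \<or> V = K" using V by simp
  from U' V' UV e1 e2 e3 show ?thesis by (auto simp: is_edge_sym)
qed

lemma D1:
  fixes T :: "'a::{finite,order} set set"
  assumes "T \<in> DeltaO - DeltaO_star"
  shows "maxel ` T \<in> DeltaC - DeltaC_star"
proof -
  have TD: "T \<in> DeltaO" and TS: "T \<notin> DeltaO_star" using assms by auto
  obtain I J K where T: "T = {I, J, K}" and iI: "poset_ideal I" and iJ: "poset_ideal J" and iK: "poset_ideal K"
    and IJ: "I \<noteq> J" and JK: "J \<noteq> K" and IK: "I \<noteq> K"
    and F: "is_2face order_polytope (rho I) (rho J) (rho K)"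
    using TD unfolding DeltaO_def by blast
  have ideals: "poset_ideal U" if "U \<in> T" for U using that T iI iJ iK by blast
  have eO: "is_edge order_polytope (rho U) (rho V)" if "U \<in> T" "V \<in> T" "U \<noteq> V" for U V
    using tri_edges[OF IJ JK IK F] that T by blast
  have eC: "is_edge chain_polytope (rho (maxel U)) (rho (maxel V))" if uv: "U \<in> T" "V \<in> T" "U \<noteq> V" for U V
  proof (rule ccontr)
    assume ne: "\<not> ?thesis"
    have "{U, V} \<in> EO_star" unfolding EO_star_def using ideals[OF uv(1)] ideals[OF uv(2)] uv(3) eO[OF uv] ne by blast
    then have "T \<in> DeltaO_star" unfolding DeltaO_star_def using TD uv by blast
    then show False using TS by blast
  qed
  have comp: "(U \<subset> V \<and> conn (V - U)) \<or> (V \<subset> U \<and> conn (U - V))" if uv: "U \<in> T" "V \<in> T" "U \<noteq> V" for U V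
    using O_edge_struct[OF ideals[OF uv(1)] ideals[OF uv(2)] uv(3) eO[OF uv]] .
  have IT: "I \<in> T" "J \<in> T" "K \<in> T" using T by auto
  have c1: "I \<subseteq> J \<or> J \<subseteq> I" using comp[OF IT(1) IT(2) IJ] by auto
  have c2: "J \<subseteq> K \<or> K \<subseteq> J" using comp[OF IT(2) IT(3) JK] by auto
  have c3: "I \<subseteq> K \<or> K \<subseteq> I" using comp[OF IT(1) IT(3) IK] by auto
  obtain X Y Z where XYZ: "{I, J, K} = {X, Y, Z}" and XY: "X \<subset> Y" and YZ: "Y \<subset> Z"
    using sort3[OF IJ JK IK c1 c2 c3] by blast
  have T2: "T = {X, Y, Z}" using T XYZ by simp
  have XT: "X \<in> T" "Y \<in> T" "Z \<in> T" using T2 by auto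
  have XYn: "X \<noteq> Y" "Y \<noteq> Z" "X \<noteq> Z" using XY YZ by auto
  define A where "A = maxel X"
  define B where "B = maxel Y"
  define C where "C = maxel Z"
  have dA: "downset A = X" unfolding A_def by (rule down_max[OF ideals[OF XT(1)]])
  have dB: "downset B = Y" unfolding B_def by (rule down_max[OF ideals[OF XT(2)]])
  have dC: "downset C = Z" unfolding C_def by (rule down_max[OF ideals[OF XT(3)]])
  have eAB: "is_edge chain_polytope (rho A) (rho B)" unfolding A_def B_def using eC[OF XT(1,2) XYn(1)] .
  have eBC: "is_edge chain_polytope (rho B) (rho C)" unfolding C_def B_def using eC[OF XT(2,3) XYn(2)] .
  have eAC: "is_edge chain_polytope (rho A) (rho C)" unfolding A_def C_def using eC[OF XT(1,3) XYn(3)] .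
  have fAB: "convex hull {rho A, rho B} face_of chain_polytope" using eAB unfolding is_edge_def by blast
  have fBC: "convex hull {rho B, rho C} face_of chain_polytope" using eBC unfolding is_edge_def by blast
  have fAC: "convex hull {rho A, rho C} face_of chain_polytope" using eAC unfolding is_edge_def by blast
  have aA: "antichain A" "antichain B" "antichain C" unfolding A_def B_def C_def by (rule maxel_anti)+
  have "is_2face chain_polytope (rho A) (rho B) (rho C)"
  proof (rule C_tri_face[OF aA])
    show "downset A \<subseteq> downset B" "downset B \<subseteq> downset C" "downset A \<noteq> downset B" "downset B \<noteq> downset C"
      unfolding dA dB dC using XY YZ by auto
    show "conn ((A - B) \<union> (B - A))" by (rule C_edge_conn[OF aA(1,2) fAB])
    show "conn ((B - C) \<union> (C - B))" by (rule C_edge_conn[OF aA(2,3) fBC])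
    show "conn ((A - C) \<union> (C - A))" by (rule C_edge_conn[OF aA(1,3) fAC])
  qed (rule fAB fBC fAC)+
  moreover have "maxel ` T = {A, B, C}" unfolding T2 A_def B_def C_def by simp
  moreover have "A \<noteq> B" "B \<noteq> C" "A \<noteq> C" using dA dB dC XYn by auto
  ultimately have wit: "maxel ` T = {A, B, C} \<and> antichain A \<and> antichain B \<and> antichain C \<and>
      A \<noteq> B \<and> B \<noteq> C \<and> A \<noteq> C \<and> is_2face chain_polytope (rho A) (rho B) (rho C)"
    using aA by simp
  have inC: "maxel ` T \<in> DeltaC"
    unfolding DeltaC_def mem_Collect_eq
    apply (rule exI[of _ A], rule exI[of _ B], rule exI[of _ C])
    using wit by simp
  have "maxel ` T \<notin> DeltaC_star"
  proof
    assume "maxel ` T \<in> DeltaC_star"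
    then obtain A' B' where AB': "A' \<in> maxel ` T" "B' \<in> maxel ` T" "A' \<noteq> B'" "{A', B'} \<in> EC_star"
      unfolding DeltaC_star_def mem_Collect_eq by metis
    from AB'(4) obtain A'' B'' where AB'': "{A', B'} = {A'', B''}" "A'' \<noteq> B''"
      "\<not> is_edge order_polytope (rho (downset A'')) (rho (downset B''))"
      unfolding EC_star_def mem_Collect_eq by metis
    have "A'' \<in> {A', B'}" "B'' \<in> {A', B'}" unfolding AB''(1) by simp_all
    then have "A'' \<in> maxel ` T" "B'' \<in> maxel ` T" using AB'(1,2) by auto
    then obtain U V where UV: "U \<in> T" "V \<in> T" "A'' = maxel U" "B'' = maxel V" by blast
    have "U \<noteq> V" using UV AB''(2) by blast
    moreover have "downset A'' = U" using UV(3) down_max[OF ideals[OF UV(1)]] by simp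
    moreover have "downset B'' = V" using UV(4) down_max[OF ideals[OF UV(2)]] by simp
    ultimately show False using eO[OF UV(1,2)] AB''(3) by simp
  qed
  then show ?thesis using inC by blast
qed

lemma D2:
  fixes T :: "'a::{finite,order} set set"
  assumes "T \<in> DeltaC - DeltaC_star"
  shows "downset ` T \<in> DeltaO - DeltaO_star"
proof -
  have TD: "T \<in> DeltaC" and TS: "T \<notin> DeltaC_star" using assms by auto
  obtain A B C where T: "T = {A, B, C}" and aA: "antichain A" and aB: "antichain B" and aC: "antichain C"
    and AB: "A \<noteq> B" and BC: "B \<noteq> C" and AC: "A \<noteq> C"
    and F: "is_2face chain_polytope (rho A) (rho B) (rho C)"
    using TD unfolding DeltaC_def by blast
  have anti: "antichain U" if "U \<in> T" for U using that T aA aB aC by blast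
  have eC: "is_edge chain_polytope (rho U) (rho V)" if "U \<in> T" "V \<in> T" "U \<noteq> V" for U V
    using tri_edges[OF AB BC AC F] that T by blast
  have eO: "is_edge order_polytope (rho (downset U)) (rho (downset V))" if uv: "U \<in> T" "V \<in> T" "U \<noteq> V" for U V
  proof (rule ccontr)
    assume ne: "\<not> ?thesis"
    have "{U, V} \<in> EC_star"
      unfolding EC_star_def mem_Collect_eq
      apply (rule exI[of _ U], rule exI[of _ V])
      using anti[OF uv(1)] anti[OF uv(2)] uv(3) eC[OF uv] ne by simp
    then have "T \<in> DeltaC_star" unfolding DeltaC_star_def mem_Collect_eq using TD uv by metis
    then show False using TS by blast
  qed
  have mdU: "maxel (downset U) = U" if "U \<in> T" for U using max_down[OF anti[OF that]] .
  have dinj: "downset U \<noteq> downset V" if "U \<in> T" "V \<in> T" "U \<noteq> V" for U V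
    using mdU that by metis
  have comp: "(downset U \<subset> downset V \<and> conn (downset V - downset U)) \<or> (downset V \<subset> downset U \<and> conn (downset U - downset V))"
    if uv: "U \<in> T" "V \<in> T" "U \<noteq> V" for U V
    using O_edge_struct[OF down_ideal down_ideal dinj[OF uv] eO[OF uv]] .
  define I where "I = downset A"
  define J where "J = downset B"
  define K where "K = downset C"
  have IT: "A \<in> T" "B \<in> T" "C \<in> T" using T by auto
  have IJ: "I \<noteq> J" "J \<noteq> K" "I \<noteq> K" unfolding I_def J_def K_def using dinj IT AB BC AC by blast+
  have c1: "I \<subseteq> J \<or> J \<subseteq> I" unfolding I_def J_def using comp[OF IT(1) IT(2) AB] by auto
  have c2: "J \<subseteq> K \<or> K \<subseteq> J" unfolding J_def K_def using comp[OF IT(2) IT(3) BC] by auto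
  have c3: "I \<subseteq> K \<or> K \<subseteq> I" unfolding I_def K_def using comp[OF IT(1) IT(3) AC] by auto
  obtain X Y Z where XYZ: "{I, J, K} = {X, Y, Z}" and XY: "X \<subset> Y" and YZ: "Y \<subset> Z"
    using sort3[OF IJ c1 c2 c3] by blast
  have T2: "downset ` T = {X, Y, Z}" using T XYZ unfolding I_def J_def K_def by simp
  have XT: "X \<in> downset ` T" "Y \<in> downset ` T" "Z \<in> downset ` T" using T2 by auto
  have cn: "conn (Q - P)" if pq: "P \<in> downset ` T" "Q \<in> downset ` T" "P \<subset> Q" for P Q
  proof -
    obtain U where U: "U \<in> T" "P = downset U" using pq(1) by blast
    obtain V where V: "V \<in> T" "Q = downset V" using pq(2) by blast
    have "U \<noteq> V" using U V pq(3) by blast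
    then show ?thesis using comp[OF U(1) V(1)] U(2) V(2) pq(3) by blast
  qed
  have iX: "poset_ideal X" "poset_ideal Y" "poset_ideal Z" using XT down_ideal by blast+
  obtain p q where pq: "p \<in> Y - X" "q \<in> Z - Y" "p \<le> q"
    using cross[OF iX(2) XY YZ cn[OF XT(1) XT(3)]] XY YZ by blast
  have F2: "is_2face order_polytope (rho X) (rho Y) (rho Z)"
    using O_tri_face[OF iX XY YZ cn[OF XT(1,2) XY] cn[OF XT(2,3) YZ] pq] .
  have XYn: "X \<noteq> Y" "Y \<noteq> Z" "X \<noteq> Z" using XY YZ by auto
  have wit: "downset ` T = {X, Y, Z} \<and> poset_ideal X \<and> poset_ideal Y \<and> poset_ideal Z \<and>
      X \<noteq> Y \<and> Y \<noteq> Z \<and> X \<noteq> Z \<and> is_2face order_polytope (rho X) (rho Y) (rho Z)"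
    using T2 iX XYn F2 by simp
  have inO: "downset ` T \<in> DeltaO"
    unfolding DeltaO_def mem_Collect_eq
    apply (rule exI[of _ X], rule exI[of _ Y], rule exI[of _ Z])
    using wit by simp
  have "downset ` T \<notin> DeltaO_star"
  proof
    assume "downset ` T \<in> DeltaO_star"
    then obtain I' J' where IJ': "I' \<in> downset ` T" "J' \<in> downset ` T" "I' \<noteq> J'" "{I', J'} \<in> EO_star"
      unfolding DeltaO_star_def mem_Collect_eq by metis
    from IJ'(4) obtain I'' J'' where IJ'': "{I', J'} = {I'', J''}" "I'' \<noteq> J''"
      "\<not> is_edge chain_polytope (rho (maxel I'')) (rho (maxel J''))"
      unfolding EO_star_def mem_Collect_eq by metis
    have "I'' \<in> {I', J'}" "J'' \<in> {I', J'}" unfolding IJ''(1) by simp_all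
    then have "I'' \<in> downset ` T" "J'' \<in> downset ` T" using IJ'(1,2) by auto
    then obtain U V where UV: "U \<in> T" "V \<in> T" "I'' = downset U" "J'' = downset V" by blast
    have "U \<noteq> V" using UV IJ''(2) by blast
    moreover have "maxel I'' = U" using UV(3) mdU[OF UV(1)] by simp
    moreover have "maxel J'' = V" using UV(4) mdU[OF UV(2)] by simp
    ultimately show False using eC[OF UV(1,2)] IJ''(3) by simp
  qed
  then show ?thesis using inO by blast
qed

theorem lemma3p3:
  shows "card ((DeltaO :: 'a::{finite,order} set set set) - DeltaO_star) =
         card ((DeltaC :: 'a set set set) - DeltaC_star)"
proof -
  let ?SO = "(DeltaO :: 'a::{finite,order} set set set) - DeltaO_star"
  let ?SC = "(DeltaC :: 'a set set set) - DeltaC_star"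
  have idO: "downset ` maxel ` T = T" if "T \<in> ?SO" for T
  proof -
    have "poset_ideal U" if "U \<in> T" for U
      using \<open>T \<in> ?SO\<close> that unfolding DeltaO_def by blast
    then have "\<forall>U\<in>T. downset (maxel U) = U" using down_max by blast
    then show ?thesis by (simp add: image_image)
  qed
  have idC: "maxel ` downset ` T = T" if "T \<in> ?SC" for T
  proof -
    have "antichain U" if "U \<in> T" for U
      using \<open>T \<in> ?SC\<close> that unfolding DeltaC_def by blast
    then have "\<forall>U\<in>T. maxel (downset U) = U" using max_down by blast
    then show ?thesis by (simp add: image_image)
  qed
  have inj1: "inj_on (\<lambda>T. maxel ` T) ?SO"
    by (rule inj_on_inverseI[where g = "\<lambda>T. downset ` T"]) (rule idO)
  have inj2: "inj_on (\<lambda>T. downset ` T) ?SC"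
    by (rule inj_on_inverseI[where g = "\<lambda>T. maxel ` T"]) (rule idC)
  have s1: "(\<lambda>T. maxel ` T) ` ?SO \<subseteq> ?SC" using D1 by blast
  have s2: "(\<lambda>T. downset ` T) ` ?SC \<subseteq> ?SO" using D2 by blast
  have "card ?SO \<le> card ?SC" by (rule card_inj_on_le[OF inj1 s1]) simp
  moreover have "card ?SC \<le> card ?SO" by (rule card_inj_on_le[OF inj2 s2]) simp
  ultimately show ?thesis by simp
qed

end
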